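(* Fix $q>0$, $R_B>0$ and $\mathbf{w}\in\mathbb{R}^n_{++}$ with $W=\sum_b w_b$. Let $\Pi\in(0,W)$. Write $$P_{\max}=\frac{W qR_B}{W-\Pi},\qquad g(P)=\frac{(qR_BW-(W-\Pi)P)^2}{2qR_B(W-\Pi)W}.$$ Then the set $\{(P,R_A)\in\mathbb{R}^2_+:\ \pi_A^*(P,R_A,R_B)=\Pi\}$ is described as follows. (a) If $\Pi<W/2$, the set consists exactly of: - the pairs $(P,R_A)$ with $P\in\big[0,\tfrac{W-2\Pi}{W-\Pi}qR_B\big)$ and $R_A=\frac{2\Pi}{W}(qR_B-P)$; together with - the pairs $(P,R_A)$ with $P\in\big[\tfrac{W-2\Pi}{W-\Pi}qR_B,\,P_{\max}\big]$ and $R_A=g(P)$. (b) If $\Pi\ge W/2$, the set consists exactly of the pairs $(P,R_A)$ with $P\in[0,P_{\max}]$ and $R_A=g(P)$. Moreover, $\pi_A^*(P,R_A,R_B)>\Pi$ for every $R_A\ge 0$ whenever $P>P_{\max}$.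
   Context: **Battlefields.** There are $n$ battlefields $\mathcal{B}=\{1,\dots,n\}$. Battlefield $b$ has value $w_b>0$, common to both players, and $W=\sum_b w_b$. **Endowments.** Player $A$ has $P\ge 0$ pre-allocated resources and $R_A\ge 0$ real-time resources. Player $B$ has $R_B>0$ real-time resources. The constant $q>0$ is the effectiveness of $B$'s resources relative to $A$'s. **Stage 1.** Player $A$ deterministically chooses a pre-allocation $\mathbf{p}\in\Delta_n(P):=\{\mathbf{p}\in\mathbb{R}^n_+:\sum_b p_b=P\}$. This choice is binding and revealed to $B$. **Stage 2.** Each player $i\in\{A,B\}$ simultaneously chooses a distribution $F_i$ over allocations $\mathbf{x}_i\in\mathbb{R}^n_+$ with $\mathbb{E}[\sum_b x_{i,b}]\le R_i$. Player $A$ wins battlefield $b$ if $x_{A,b}+p_b>q\,x_{B,b}$; otherwise $B$ wins it. The tie-breaking rule is arbitrary. $A$'s payoff is the expected total value won, and $B$'s payoff is $W$ minus this. **Equilibrium payoffs.** The stage-2 game has unique equilibrium payoffs; $A$'s is denoted $\pi_A(\mathbf{p},R_A,R_B)$. Define $$\pi_A^*(P,R_A,R_B)=\max_{\mathbf{p}\in\Delta_n(P)}\pi_A(\mathbf{p},R_A,R_B).$$ This maximum equals the following. - If $qR_B>P$ and $R_A<\dfrac{2(qR_B-P)^2}{2qR_B-P}$: $\ \pi_A^*(P,R_A,R_B)=\dfrac{W R_A}{2(qR_B-P)}$. - Otherwise: $\ \pi_A^*(P,R_A,R_B)=W\left(1-\dfrac{qR_B}{P+R_A+\sqrt{(R_A+P)^2-P^2}}\right)$.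 *)

theory Defs
  imports Complex_Main
begin

text \<open>Optimal equilibrium payoff of player A, pi_A^*(P,R_A,R_B), in the closed form
  given in the paper (depends on the battlefield values only through W = sum of values).\<close>
definition pi_A_star :: "real \<Rightarrow> real \<Rightarrow> real \<Rightarrow> real \<Rightarrow> real \<Rightarrow> real" where
  "pi_A_star W q P R_A R_B =
     (if q * R_B > P \<and> R_A < 2 * (q * R_B - P)^2 / (2 * q * R_B - P)
      then W * R_A / (2 * (q * R_B - P))
      else W * (1 - q * R_B / (P + R_A + sqrt ((R_A + P)^2 - P^2))))"

definition P_max :: "real \<Rightarrow> real \<Rightarrow> real \<Rightarrow> real \<Rightarrow> real" where
  "P_max W Pi q R_B = W * q * R_B / (W - Pi)"

definition g_fun :: "real \<Rightarrow> real \<Rightarrow> real \<Rightarrow> real \<Rightarrow> real \<Rightarrow> real" where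
  "g_fun W Pi q R_B P = (q * R_B * W - (W - Pi) * P)^2 / (2 * q * R_B * (W - Pi) * W)"

end

theory Submission
  imports Defs
begin

definition SS :: "real \<Rightarrow> real \<Rightarrow> real" where
  "SS P R = P + R + sqrt ((R + P)^2 - P^2)"

lemma sq_id: "(R + P)^2 - P^2 = R * (R + 2*P)" for R P :: real
  by (simp add: power2_eq_square algebra_simps)

lemma SS_eq:
  assumes "P \<ge> 0" "R \<ge> 0" "M > 0"
  shows "SS P R = M \<longleftrightarrow> P \<le> M \<and> R = (M - P)^2 / (2*M)"
proof
  assume h: "SS P R = M"
  have s: "sqrt (R * (R + 2*P)) = M - P - R" using h by (simp add: SS_def sq_id)
  have nn: "M - P - R \<ge> 0" using s[symmetric] assms by simp
  have "R * (R + 2*P) = (M - P - R)^2" using s assms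
    by (metis mult_nonneg_nonneg add_nonneg_nonneg real_sqrt_pow2 mult_2 )
  hence "2*M*R = (M-P)^2" by (simp add: power2_eq_square algebra_simps)
  hence "R = (M - P)^2 / (2*M)" using assms by (simp add: field_simps)
  thus "P \<le> M \<and> R = (M - P)^2 / (2*M)" using nn assms(2) by linarith
next
  assume h: "P \<le> M \<and> R = (M - P)^2 / (2*M)"
  hence e: "2*M*R = (M-P)^2" using assms by (simp add: field_simps)
  have "(M-P)^2 \<le> 2*M*(M-P)" using h assms
    by (simp add: power2_eq_square mult_right_mono)
  hence "2*M*R \<le> 2*M*(M-P)" using e by simp
  hence "R \<le> M - P" using assms by simp
  hence nn: "M - P - R \<ge> 0" by simp
  have "(M - P - R)^2 = R * (R + 2*P)"
  proof -
    have "(M - P - R)^2 = (M-P)^2 - 2*(M-P)*R + R^2" by (simp add: power2_eq_square algebra_simps)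
    also have "\<dots> = 2*M*R - 2*(M-P)*R + R^2" using e by simp
    also have "\<dots> = R * (R + 2*P)" by (simp add: power2_eq_square algebra_simps)
    finally show ?thesis .
  qed
  hence "sqrt (R * (R + 2*P)) = M - P - R" using nn by (simp add: real_sqrt_unique)
  thus "SS P R = M" by (simp add: SS_def sq_id)
qed

lemma SS_mono:
  assumes "P \<ge> 0" "0 \<le> R1" "R1 < R2"
  shows "SS P R1 < SS P R2"
proof -
  have "R1 * (R1 + 2*P) \<le> R2 * (R2 + 2*P)" using assms by (intro mult_mono) auto
  hence "sqrt (R1 * (R1 + 2*P)) \<le> sqrt (R2 * (R2 + 2*P))" by simp
  thus ?thesis using assms unfolding SS_def sq_id by linarith
qed

lemma SS_ge: assumes "P \<ge> 0" "R \<ge> 0" shows "SS P R \<ge> P + R"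
  using assms by (simp add: SS_def sq_id)

lemma SS_Rc:
  assumes "P \<ge> 0" "P < Q"
  shows "SS P (2*(Q-P)^2/(2*Q-P)) = 2*Q - P"
proof -
  define Rc where "Rc = 2*(Q-P)^2/(2*Q-P)"
  have d: "2*Q - P > 0" using assms by simp
  have Rc2: "Rc + 2*P = 2*Q^2/(2*Q-P)" using d unfolding Rc_def
    by (simp add: field_simps power2_eq_square)
  have "Rc * (Rc + 2*P) = (2*Q*(Q-P)/(2*Q-P))^2" unfolding Rc2 using d
    unfolding Rc_def by (simp add: field_simps power2_eq_square)
  moreover have "2*Q*(Q-P)/(2*Q-P) \<ge> 0" using assms d by simp
  ultimately have s: "sqrt (Rc * (Rc + 2*P)) = 2*Q*(Q-P)/(2*Q-P)" by (metis real_sqrt_abs abs_of_nonneg)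
  have "SS P Rc = P + Rc + 2*Q*(Q-P)/(2*Q-P)" by (simp add: SS_def sq_id s)
  also have "\<dots> = 2*Q - P"
  proof -
    have a: "Rc + 2*Q*(Q-P)/(2*Q-P) = (2*(Q-P)^2 + 2*Q*(Q-P))/(2*Q-P)"
      unfolding Rc_def by (simp add: add_divide_distrib)
    have b: "2*(Q-P)^2 + 2*Q*(Q-P) = (2*(Q-P))*(2*Q-P)" by (simp add: power2_eq_square algebra_simps)
    have "Rc + 2*Q*(Q-P)/(2*Q-P) = 2*(Q-P)" unfolding a b using d by simp
    thus ?thesis by simp
  qed
  finally show ?thesis unfolding Rc_def .
qed


lemma pi_unfold: "pi_A_star W q P R R_B = (if q*R_B > P \<and> R < 2*(q*R_B-P)^2/(2*(q*R_B)-P)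
   then W*R/(2*(q*R_B-P)) else W*(1 - q*R_B / SS P R))"
  unfolding pi_A_star_def SS_def by (simp add: mult.assoc)

lemma pointwise:
  fixes Q W Pi P R :: real
  assumes Q: "Q > 0" and W: "0 < Pi" "Pi < W" and P: "P \<ge> 0" and R: "R \<ge> 0"
  defines "M \<equiv> W*Q/(W-Pi)" and "T \<equiv> (W - 2*Pi)/(W-Pi)*Q"
  shows "(if Q > P \<and> R < 2*(Q-P)^2/(2*Q-P) then W*R/(2*(Q-P)) else W*(1 - Q / SS P R)) = Pi
     \<longleftrightarrow> (P < T \<and> R = 2*Pi/W*(Q-P)) \<or> (T \<le> P \<and> P \<le> M \<and> R = (M-P)^2/(2*M))"
proof -
  have D: "W - Pi > 0" using W by simp
  have Mpos: "M > 0" using D W Q unfolding M_def by simp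
  have TQ: "T < Q"
  proof -
    have "(W - 2*Pi)/(W-Pi) < 1" using D W by (simp add: field_simps)
    thus ?thesis unfolding T_def using Q by (metis mult_strict_right_mono mult_1)
  qed
  have F6: "2*Q - P \<le> M \<longleftrightarrow> T \<le> P"
  proof -
    have "2*Q - P \<le> M \<longleftrightarrow> (2*Q - P)*(W-Pi) \<le> W*Q" unfolding M_def using D by (simp add: field_simps)
    also have "\<dots> \<longleftrightarrow> (W - 2*Pi)*Q \<le> P*(W-Pi)" by (simp add: algebra_simps)
    also have "\<dots> \<longleftrightarrow> T \<le> P" unfolding T_def using D by (simp add: field_simps)
    finally show ?thesis .
  qed
  have F1: "W*(1 - Q / SS P R) = Pi \<longleftrightarrow> SS P R = M"
  proof (cases "SS P R = 0")
    case True thus ?thesis using Mpos W by simp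
  next
    case False
    have "W*(1 - Q / SS P R) = Pi \<longleftrightarrow> W * SS P R - W*Q = Pi * SS P R" using False W
      by (simp add: field_simps)
    also have "\<dots> \<longleftrightarrow> SS P R * (W - Pi) = W*Q" by (simp add: algebra_simps)
    also have "\<dots> \<longleftrightarrow> SS P R = M" unfolding M_def using D by (simp add: field_simps)
    finally show ?thesis .
  qed
  have F4: "R = 2*Pi/W*(Q-P) \<Longrightarrow> Q > P \<Longrightarrow> (R < 2*(Q-P)^2/(2*Q-P) \<longleftrightarrow> P < T)"
  proof -
    assume r: "R = 2*Pi/W*(Q-P)" and qp: "Q > P"
    have RW: "R*W = 2*Pi*(Q-P)" unfolding r using W by simp
    have "R < 2*(Q-P)^2/(2*Q-P) \<longleftrightarrow> R*(2*Q-P) < 2*(Q-P)^2"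
      using pos_less_divide_eq[of "2*Q-P" R "2*(Q-P)^2"] qp P by simp
    also have "\<dots> \<longleftrightarrow> (R*(2*Q-P))*W < (2*(Q-P)^2)*W"
      using mult_less_cancel_right_pos[of W] W by simp
    also have "\<dots> \<longleftrightarrow> (2*(Q-P))*(Pi*(2*Q-P)) < (2*(Q-P))*((Q-P)*W)"
    proof -
      have e1: "(R*(2*Q-P))*W = (2*(Q-P))*(Pi*(2*Q-P))"
        by (metis RW mult.assoc mult.commute)
      have e2: "(2*(Q-P)^2)*W = (2*(Q-P))*((Q-P)*W)"
        by (simp add: power2_eq_square)
      show ?thesis unfolding e1 e2 ..
    qed
    also have "\<dots> \<longleftrightarrow> Pi*(2*Q-P) < (Q-P)*W" using qp by simp
    also have "\<dots> \<longleftrightarrow> (W - 2*Pi)*Q > P*(W-Pi)" by (simp add: algebra_simps)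
    also have "\<dots> \<longleftrightarrow> P < T" unfolding T_def using D by (simp add: field_simps)
    finally show ?thesis .
  qed
  have F3: "Q > P \<Longrightarrow> (W*R/(2*(Q-P)) = Pi \<longleftrightarrow> R = 2*Pi/W*(Q-P))"
    using W by (auto simp: field_simps)
  have SSeq: "SS P R = M \<longleftrightarrow> P \<le> M \<and> R = (M-P)^2/(2*M)" using SS_eq[OF P R Mpos] .
  show ?thesis
  proof (cases "Q > P \<and> R < 2*(Q-P)^2/(2*Q-P)")
    case True
    have lt: "SS P R < 2*Q - P" using SS_mono[OF P R, of "2*(Q-P)^2/(2*Q-P)"] SS_Rc[OF P, of Q] True by simp
    have n1: "\<not> (T \<le> P \<and> P \<le> M \<and> R = (M-P)^2/(2*M))"
      using SSeq lt F6 by auto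
    have n2: "W*R/(2*(Q-P)) = Pi \<longleftrightarrow> (P < T \<and> R = 2*Pi/W*(Q-P))"
      using F3 F4 True by blast
    have ifeq: "(if Q > P \<and> R < 2*(Q-P)^2/(2*Q-P) then W*R/(2*(Q-P)) else W*(1 - Q / SS P R)) = W*R/(2*(Q-P))"
      using True by (rule if_P)
    show ?thesis unfolding ifeq using n1 n2 by blast
  next
    case False
    have "SS P R = M \<Longrightarrow> T \<le> P"
    proof -
      assume e: "SS P R = M"
      show "T \<le> P"
      proof (cases "Q > P")
        case True
        hence "R \<ge> 2*(Q-P)^2/(2*Q-P)" using False by simp
        moreover have "2*(Q-P)^2/(2*Q-P) \<ge> 0" using True P by simp
        ultimately have "SS P R \<ge> 2*Q - P" using SS_mono[OF P, of "2*(Q-P)^2/(2*Q-P)" R] SS_Rc[OF P True]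
          True by (cases "R = 2*(Q-P)^2/(2*Q-P)") auto
        thus ?thesis using e F6 by simp
      next
        case False thus ?thesis using TQ by simp
      qed
    qed
    moreover have "\<not> (P < T \<and> R = 2*Pi/W*(Q-P))"
      using F4 TQ False by auto
    ultimately show ?thesis using False F1 SSeq by auto
  qed
qed


theorem theorem2:
  fixes n :: nat and w :: "nat \<Rightarrow> real" and q R_B W Pi :: real
  assumes "q > 0" and "R_B > 0"
    and "\<forall>b\<in>{1..n}. w b > 0"
    and "W = (\<Sum>b=1..n. w b)"
    and "0 < Pi" and "Pi < W"
  shows "(Pi < W / 2 \<longrightarrow>
           {(P, R_A). P \<ge> 0 \<and> R_A \<ge> 0 \<and> pi_A_star W q P R_A R_B = Pi} =
             {(P, R_A). 0 \<le> P \<and> P < (W - 2 * Pi) / (W - Pi) * q * R_B \<and>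
                        R_A = 2 * Pi / W * (q * R_B - P)}
           \<union> {(P, R_A). (W - 2 * Pi) / (W - Pi) * q * R_B \<le> P \<and> P \<le> P_max W Pi q R_B \<and>
                        R_A = g_fun W Pi q R_B P})
       \<and> (Pi \<ge> W / 2 \<longrightarrow>
           {(P, R_A). P \<ge> 0 \<and> R_A \<ge> 0 \<and> pi_A_star W q P R_A R_B = Pi} =
             {(P, R_A). 0 \<le> P \<and> P \<le> P_max W Pi q R_B \<and> R_A = g_fun W Pi q R_B P})
       \<and> (\<forall>P R_A. P > P_max W Pi q R_B \<longrightarrow> R_A \<ge> 0 \<longrightarrow> pi_A_star W q P R_A R_B > Pi)"
proof -
  define Q where "Q = q * R_B"
  define M where "M = W*Q/(W-Pi)"
  define T where "T = (W - 2*Pi)/(W-Pi)*Q"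
  have Q: "Q > 0" unfolding Q_def using assms by simp
  have W: "0 < Pi" "Pi < W" using assms by auto
  have D: "W - Pi > 0" "W > 0" using W by auto
  have Mpos: "M > 0" unfolding M_def using D Q by simp
  have MQ: "M > Q"
  proof -
    have "W/(W-Pi) > 1" using D W by simp
    hence "W/(W-Pi)*Q > 1*Q" using Q by (metis mult_strict_right_mono)
    thus ?thesis unfolding M_def by simp
  qed
  have TQ: "T < Q"
  proof -
    have "(W - 2*Pi)/(W-Pi) < 1" using D W by (simp add: field_simps)
    thus ?thesis unfolding T_def using Q by (metis mult_strict_right_mono mult_1)
  qed
  have Teq: "(W - 2 * Pi) / (W - Pi) * q * R_B = T" unfolding T_def Q_def by simp
  have Meq: "P_max W Pi q R_B = M" unfolding P_max_def M_def Q_def by (simp add: mult.assoc)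
  have geq: "g_fun W Pi q R_B P = (M-P)^2/(2*M)" for P
  proof -
    have a: "M - P = (W*Q - (W-Pi)*P)/(W-Pi)" unfolding M_def using D by (simp add: field_simps)
    have gen: "(X/E)^2/(2*(C/E)) = X^2/(2*C*E)" if "E > 0" "C > 0" for X E C :: real
      using that by (simp add: field_simps power2_eq_square)
    have "(M-P)^2/(2*M) = ((W*Q - (W-Pi)*P)/(W-Pi))^2 / (2*((W*Q)/(W-Pi)))"
      by (simp only: a) (simp add: M_def)
    also have "\<dots> = (W*Q - (W-Pi)*P)^2 / (2*(W*Q)*(W-Pi))"
      using gen D Q by simp
    also have "\<dots> = (W*Q - (W-Pi)*P)^2 / (2*Q*(W-Pi)*W)"
      by (simp add: ac_simps)
    finally show ?thesis unfolding g_fun_def Q_def by (simp add: mult.commute)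
  qed
  have key: "pi_A_star W q P R R_B = Pi \<longleftrightarrow>
      (P < T \<and> R = 2*Pi/W*(Q-P)) \<or> (T \<le> P \<and> P \<le> M \<and> R = (M-P)^2/(2*M))"
    if "P \<ge> 0" "R \<ge> 0" for P R
    unfolding pi_unfold Q_def[symmetric] M_def T_def
    using pointwise[OF Q W that] by simp
  have lin_nn: "2*Pi/W*(Q-P) \<ge> 0" if "P < T" for P using that TQ W D by simp
  have part1: "Pi < W / 2 \<longrightarrow>
           {(P, R_A). P \<ge> 0 \<and> R_A \<ge> 0 \<and> pi_A_star W q P R_A R_B = Pi} =
             {(P, R_A). 0 \<le> P \<and> P < (W - 2 * Pi) / (W - Pi) * q * R_B \<and>
                        R_A = 2 * Pi / W * (q * R_B - P)}
           \<union> {(P, R_A). (W - 2 * Pi) / (W - Pi) * q * R_B \<le> P \<and> P \<le> P_max W Pi q R_B \<and>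
                        R_A = g_fun W Pi q R_B P}"
  proof
    assume h: "Pi < W/2"
    have Tpos: "T > 0" unfolding T_def using h D Q by simp
    show "{(P, R_A). P \<ge> 0 \<and> R_A \<ge> 0 \<and> pi_A_star W q P R_A R_B = Pi} =
             {(P, R_A). 0 \<le> P \<and> P < (W - 2 * Pi) / (W - Pi) * q * R_B \<and>
                        R_A = 2 * Pi / W * (q * R_B - P)}
           \<union> {(P, R_A). (W - 2 * Pi) / (W - Pi) * q * R_B \<le> P \<and> P \<le> P_max W Pi q R_B \<and>
                        R_A = g_fun W Pi q R_B P}"
      unfolding Teq Meq geq Q_def[symmetric]
    proof (intro set_eqI iffI)
      fix x assume "x \<in> {(P, R_A). P \<ge> 0 \<and> R_A \<ge> 0 \<and> pi_A_star W q P R_A R_B = Pi}"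
      then obtain P R where x: "x = (P,R)" "P \<ge> 0" "R \<ge> 0" "pi_A_star W q P R R_B = Pi" by auto
      thus "x \<in> {(P, R_A). 0 \<le> P \<and> P < T \<and> R_A = 2 * Pi / W * (Q - P)} \<union>
          {(P, R_A). T \<le> P \<and> P \<le> M \<and> R_A = (M - P)\<^sup>2 / (2 * M)}"
        using key[OF x(2,3)] by auto
    next
      fix x assume a: "x \<in> {(P, R_A). 0 \<le> P \<and> P < T \<and> R_A = 2 * Pi / W * (Q - P)} \<union>
          {(P, R_A). T \<le> P \<and> P \<le> M \<and> R_A = (M - P)\<^sup>2 / (2 * M)}"
      then obtain P R where x: "x = (P,R)" by (cases x)
      have P: "P \<ge> 0" using a x Tpos by auto
      have R: "R \<ge> 0" using a x lin_nn Mpos by auto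
      show "x \<in> {(P, R_A). P \<ge> 0 \<and> R_A \<ge> 0 \<and> pi_A_star W q P R_A R_B = Pi}"
        using key[OF P R] a x P R by auto
    qed
  qed
  have part2: "Pi \<ge> W / 2 \<longrightarrow>
           {(P, R_A). P \<ge> 0 \<and> R_A \<ge> 0 \<and> pi_A_star W q P R_A R_B = Pi} =
             {(P, R_A). 0 \<le> P \<and> P \<le> P_max W Pi q R_B \<and> R_A = g_fun W Pi q R_B P}"
  proof
    assume h: "Pi \<ge> W/2"
    have Tn: "T \<le> 0" unfolding T_def using h D Q
      by (simp add: divide_nonpos_pos mult_nonpos_nonneg)
    show "{(P, R_A). P \<ge> 0 \<and> R_A \<ge> 0 \<and> pi_A_star W q P R_A R_B = Pi} =
             {(P, R_A). 0 \<le> P \<and> P \<le> P_max W Pi q R_B \<and> R_A = g_fun W Pi q R_B P}"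
      unfolding Meq geq
    proof (intro set_eqI iffI)
      fix x assume "x \<in> {(P, R_A). P \<ge> 0 \<and> R_A \<ge> 0 \<and> pi_A_star W q P R_A R_B = Pi}"
      then obtain P R where x: "x = (P,R)" "P \<ge> 0" "R \<ge> 0" "pi_A_star W q P R R_B = Pi" by auto
      thus "x \<in> {(P, R_A). 0 \<le> P \<and> P \<le> M \<and> R_A = (M - P)\<^sup>2 / (2 * M)}"
        using key[OF x(2,3)] Tn by auto
    next
      fix x assume a: "x \<in> {(P, R_A). 0 \<le> P \<and> P \<le> M \<and> R_A = (M - P)\<^sup>2 / (2 * M)}"
      then obtain P R where x: "x = (P,R)" by (cases x)
      have P: "P \<ge> 0" using a x by auto
      have R: "R \<ge> 0" using a x Mpos by auto
      show "x \<in> {(P, R_A). P \<ge> 0 \<and> R_A \<ge> 0 \<and> pi_A_star W q P R_A R_B = Pi}"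
        using key[OF P R] a x P R Tn by auto
    qed
  qed
  have part3: "\<forall>P R_A. P > P_max W Pi q R_B \<longrightarrow> R_A \<ge> 0 \<longrightarrow> pi_A_star W q P R_A R_B > Pi"
  proof (intro allI impI)
    fix P R :: real assume p: "P > P_max W Pi q R_B" and r: "R \<ge> 0"
    have pm: "P > M" using p Meq by simp
    have P: "P \<ge> 0" using pm Mpos by simp
    have nc: "\<not> (Q > P)" using pm MQ by simp
    have S: "SS P R > M" using SS_ge[OF P r] pm r by simp
    have "Q / SS P R < Q / M" using S Mpos Q by (simp add: divide_strict_left_mono)
    also have "Q / M = (W - Pi)/W" unfolding M_def using D Q by (simp add: field_simps)
    finally have "Q / SS P R < (W-Pi)/W" .
    hence "W * (Q / SS P R) < W * ((W-Pi)/W)" using D by (simp only: mult_less_cancel_left_pos)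
    also have "W * ((W-Pi)/W) = W - Pi" using D by simp
    finally have "W * (Q / SS P R) < W - Pi" .
    hence "W * (1 - Q / SS P R) > Pi" by (simp add: right_diff_distrib)
    thus "pi_A_star W q P R R_B > Pi" unfolding pi_unfold Q_def[symmetric] using nc by simp
  qed
  show ?thesis using part1 part2 part3 by blast
qed

end
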